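(* Under the hypotheses of the FTRL regret setting in the context (non-negative losses $\ell_k\in\mathbb R^A$; $0<\alpha_1\le1$, $\eta_1=\eta_2(1-\alpha_1)$; for $k\ge2$, $0<\alpha_k<1$ and $0<\eta_{k+1}(1-\alpha_k)\le\eta_k$), define for $k\ge1$ the auxiliary distribution $\pi_{k+1}^-(a)=\exp(-\widehat\eta_kL_k(a))/\sum_{a'}\exp(-\widehat\eta_kL_k(a'))$. Then for every $n\ge1$, $$R_n\le\sum_{k=1}^n\alpha_k^n\langle\pi_k-\pi_{k+1}^-,\ell_k\rangle+\frac{\log A}{\eta_{n+1}}.$$
   Context: Online weighted linear optimization over $\mathcal A=\{1,\dots,A\}$: given $\{\alpha_k\}\subset(0,1]$, let $\alpha_i^k=\alpha_i\prod_{j=i+1}^k(1-\alpha_j)$ for $i<k$, $\alpha_k^k=\alpha_k$. Define $L_0=0$ and $L_k=(1-\alpha_k)L_{k-1}+\alpha_k\ell_k=\sum_{i=1}^k\alpha_i^k\ell_i$. FTRL iterates: $\pi_k(a)=\exp(-\eta_kL_{k-1}(a))/\sum_{a'}\exp(-\eta_kL_{k-1}(a'))$, $k\ge1$. $\widehat\eta_1=\eta_2$ and $\widehat\eta_k=\eta_k/(1-\alpha_k)$ for $k>1$. Regret: $R_n=\max_{a}\{\sum_{k=1}^n\alpha_k^n\langle\pi_k,\ell_k\rangle-\sum_{k=1}^n\alpha_k^n\ell_k(a)\}$. *)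

theory Defs
  imports Complex_Main
begin

text \<open>Actions are 1..A; losses ell k a (k >= 1, a in 1..A); step sizes alpha k, learning rates eta k.\<close>

definition wgt :: "(nat \<Rightarrow> real) \<Rightarrow> nat \<Rightarrow> nat \<Rightarrow> real" where
  "wgt alpha i k = alpha i * (\<Prod>j\<in>{i+1..k}. (1 - alpha j))"

definition cumL :: "(nat \<Rightarrow> real) \<Rightarrow> (nat \<Rightarrow> nat \<Rightarrow> real) \<Rightarrow> nat \<Rightarrow> nat \<Rightarrow> real" where
  "cumL alpha ell k a = (\<Sum>i=1..k. wgt alpha i k * ell i a)"

definition softmax :: "nat \<Rightarrow> real \<Rightarrow> (nat \<Rightarrow> real) \<Rightarrow> nat \<Rightarrow> real" where
  "softmax A eta L a = exp (- eta * L a) / (\<Sum>a'=1..A. exp (- eta * L a'))"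

definition ftrl :: "nat \<Rightarrow> (nat \<Rightarrow> real) \<Rightarrow> (nat \<Rightarrow> real) \<Rightarrow> (nat \<Rightarrow> nat \<Rightarrow> real) \<Rightarrow> nat \<Rightarrow> nat \<Rightarrow> real" where
  "ftrl A alpha eta ell k = softmax A (eta k) (cumL alpha ell (k - 1))"

definition etahat :: "(nat \<Rightarrow> real) \<Rightarrow> (nat \<Rightarrow> real) \<Rightarrow> nat \<Rightarrow> real" where
  "etahat alpha eta k = (if k = 1 then eta 2 else eta k / (1 - alpha k))"

text \<open>Auxiliary distribution: pim k = pi_{k+1}^- for k >= 1.\<close>
definition pim :: "nat \<Rightarrow> (nat \<Rightarrow> real) \<Rightarrow> (nat \<Rightarrow> real) \<Rightarrow> (nat \<Rightarrow> nat \<Rightarrow> real) \<Rightarrow> nat \<Rightarrow> nat \<Rightarrow> real" where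
  "pim A alpha eta ell k = softmax A (etahat alpha eta k) (cumL alpha ell k)"

definition regret :: "nat \<Rightarrow> (nat \<Rightarrow> real) \<Rightarrow> (nat \<Rightarrow> real) \<Rightarrow> (nat \<Rightarrow> nat \<Rightarrow> real) \<Rightarrow> nat \<Rightarrow> real" where
  "regret A alpha eta ell n =
     Max ((\<lambda>a. (\<Sum>k=1..n. wgt alpha k n * (\<Sum>b=1..A. ftrl A alpha eta ell k b * ell k b))
               - (\<Sum>k=1..n. wgt alpha k n * ell k a)) ` {1..A})"

end

theory Submission imports Defs "HOL-Analysis.Convex" begin

definition SS :: "nat \<Rightarrow> real \<Rightarrow> (nat \<Rightarrow> real) \<Rightarrow> real" where
  "SS A e L = (\<Sum>a=1..A. exp (- e * L a))"
definition HH :: "nat \<Rightarrow> real \<Rightarrow> (nat \<Rightarrow> real) \<Rightarrow> real" where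
  "HH A e L = - ln (SS A e L / real A) / e"

lemma SS_pos: "A \<ge> 1 \<Longrightarrow> SS A e L > 0"
  unfolding SS_def by (intro sum_pos) auto

lemma HH_zero: "HH A e (\<lambda>a. 0) = 0"
  by (simp add: HH_def SS_def)

lemma jensen_exp:
  fixes p x :: "nat \<Rightarrow> real"
  assumes "finite I" "\<And>a. a \<in> I \<Longrightarrow> p a \<ge> 0" "(\<Sum>a\<in>I. p a) = 1"
  shows "exp (\<Sum>a\<in>I. p a * x a) \<le> (\<Sum>a\<in>I. p a * exp (x a))"
proof -
  define c where "c = (\<Sum>a\<in>I. p a * x a)"
  have "\<And>a. a \<in> I \<Longrightarrow> p a * (exp c * (1 + (x a - c))) \<le> p a * exp (x a)"
  proof -
    fix a assume a: "a \<in> I"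
    have "exp c * (1 + (x a - c)) \<le> exp c * exp (x a - c)"
      by (intro mult_left_mono) auto
    also have "\<dots> = exp (x a)" by (simp add: exp_diff)
    finally show "p a * (exp c * (1 + (x a - c))) \<le> p a * exp (x a)"
      using assms(2)[OF a] by (intro mult_left_mono) auto
  qed
  hence "(\<Sum>a\<in>I. p a * (exp c * (1 + (x a - c)))) \<le> (\<Sum>a\<in>I. p a * exp (x a))"
    by (intro sum_mono) auto
  moreover have "(\<Sum>a\<in>I. p a * (exp c * (1 + (x a - c)))) = exp c * ((\<Sum>a\<in>I. p a) + (\<Sum>a\<in>I. p a * x a) - c * (\<Sum>a\<in>I. p a))"
    by (simp add: algebra_simps sum.distrib sum_distrib_left sum_distrib_right sum_subtractf)
  ultimately show ?thesis using assms(3) by (simp add: c_def)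
qed

lemma conc:
  assumes A: "A \<ge> 1" and e: "e > 0"
  shows "(\<Sum>a=1..A. softmax A e L a * (L a - M a)) \<le> HH A e L - HH A e M"
proof -
  let ?p = "\<lambda>a. softmax A e L a"
  have S: "SS A e L > 0" "SS A e M > 0" using A by (auto intro: SS_pos)
  have p1: "(\<Sum>a=1..A. ?p a) = 1"
    using S by (simp add: softmax_def SS_def flip: sum_divide_distrib)
  have "exp (\<Sum>a=1..A. ?p a * (e * (L a - M a))) \<le> (\<Sum>a=1..A. ?p a * exp (e * (L a - M a)))"
    using p1 S(1) by (intro jensen_exp) (auto simp: softmax_def SS_def)
  also have "\<dots> = SS A e M / SS A e L"
    unfolding SS_def softmax_def sum_divide_distrib
    by (intro sum.cong refl) (simp add: algebra_simps flip: exp_add)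
  finally have "(\<Sum>a=1..A. ?p a * (e * (L a - M a))) \<le> ln (SS A e M / SS A e L)"
    using S by (simp add: ln_ge_iff)
  also have "\<dots> = ln (SS A e M) - ln (SS A e L)" using S by (simp add: ln_div)
  finally have "e * (\<Sum>a=1..A. ?p a * (L a - M a)) \<le> ln (SS A e M) - ln (SS A e L)"
    by (simp add: sum_distrib_left algebra_simps)
  hence "(\<Sum>a=1..A. ?p a * (L a - M a)) \<le> (ln (SS A e M) - ln (SS A e L)) / e"
    using e by (simp add: le_divide_eq mult.commute)
  also have "\<dots> = HH A e L - HH A e M"
    using S A e by (simp add: HH_def ln_div diff_divide_distrib)
  finally show ?thesis .
qed

lemma scale:
  assumes "c > 0" "e > 0"
  shows "HH A e (\<lambda>a. c * L a) = c * HH A (c * e) L"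
  using assms by (simp add: HH_def SS_def ac_simps)

lemma bound:
  assumes A: "A \<ge> 1" and e: "e > 0" and a: "a \<in> {1..A}"
  shows "HH A e L \<le> L a + ln (real A) / e"
proof -
  have "exp (- e * L a) \<le> SS A e L"
    unfolding SS_def using a by (intro member_le_sum) auto
  hence "- e * L a \<le> ln (SS A e L)" using SS_pos[OF A] by (simp add: ln_ge_iff)
  hence "- ln (SS A e L) / e \<le> L a" using e by (simp add: field_simps)
  thus ?thesis using SS_pos[OF A, of e L] A e
    by (simp add: HH_def ln_div diff_divide_distrib)
qed

lemma mono:
  assumes A: "A \<ge> 1" and s: "0 < s" "s \<le> t"
  shows "HH A t L \<le> HH A s L"
proof -
  define r where "r = s / t"
  have t: "t > 0" using s by simp
  have r: "0 < r" "r \<le> 1" using s t by (auto simp: r_def)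
  define m where "m = SS A t L / A"
  have m: "m > 0" using SS_pos[OF A] A by (simp add: m_def)
  define lm where "lm = ln m"
  have "\<And>a. exp (- s * L a) * exp ((1 - r) * lm) \<le> r * exp (- t * L a) + (1 - r) * m"
  proof -
    fix a
    have conv: "exp ((1 - r) *\<^sub>R lm + r *\<^sub>R (- t * L a)) \<le> (1 - r) * exp lm + r * exp (- t * L a)"
      using r by (intro convex_onD[OF exp_convex]) auto
    moreover have rt: "r * t = s" using t by (simp add: r_def)
    have eq: "(1 - r) *\<^sub>R lm + r *\<^sub>R (- t * L a) = - s * L a + (1 - r) * lm"
      by (simp flip: rt add: algebra_simps)
    have em: "exp lm = m" using m by (simp add: lm_def)
    from conv show "exp (- s * L a) * exp ((1 - r) * lm) \<le> r * exp (- t * L a) + (1 - r) * m"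
      unfolding eq em exp_add by (simp add: algebra_simps)
  qed
  hence "(\<Sum>a=1..A. exp (- s * L a) * exp ((1 - r) * lm)) \<le> (\<Sum>a=1..A. r * exp (- t * L a) + (1 - r) * m)"
    by (intro sum_mono) auto
  also have "\<dots> = r * SS A t L + (1 - r) * real A * m"
    by (simp add: SS_def sum.distrib sum_distrib_left)
  also have "\<dots> = real A * m" using A by (simp add: m_def field_simps)
  finally have "SS A s L * exp ((1 - r) * lm) \<le> real A * exp lm"
    using m by (simp add: SS_def sum_distrib_right lm_def)
  hence "SS A s L \<le> real A * exp lm / exp ((1 - r) * lm)"
    by (simp add: le_divide_eq)
  also have "\<dots> = real A * exp (r * lm)"
  proof -
    have "exp lm = exp (r * lm) * exp ((1 - r) * lm)"
      by (simp flip: exp_add add: algebra_simps)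
    thus ?thesis by simp
  qed
  finally have "SS A s L / real A \<le> exp (r * lm)" using A by (simp add: divide_le_eq mult.commute)
  hence "ln (SS A s L / real A) \<le> ln (exp (r * lm))"
    using SS_pos[OF A, of s L] A by (intro ln_mono) auto
  hence "ln (SS A s L / real A) \<le> r * lm" by simp
  hence "ln (SS A s L / real A) / s \<le> ln (SS A t L / real A) / t"
    using s t by (simp add: r_def lm_def m_def divide_le_eq field_simps)
  thus ?thesis by (simp add: HH_def)
qed


lemma tele: "(\<Sum>k=1..n. f k - f (k - 1)) = f n - (f 0 :: real)" for n :: nat
  by (induction n) (auto simp: sum.cl_ivl_Suc)

lemma cumL_step:
  assumes "k \<ge> 1"
  shows "cumL alpha ell k a = (1 - alpha k) * cumL alpha ell (k - 1) a + alpha k * ell k a"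
proof -
  obtain m where k: "k = Suc m" using assms by (cases k) auto
  have w: "wgt alpha i (Suc m) = (1 - alpha (Suc m)) * wgt alpha i m" if "i \<in> {1..m}" for i
    using that by (simp add: wgt_def prod.cl_ivl_Suc)
  have "cumL alpha ell (Suc m) a = (\<Sum>i=1..m. wgt alpha i (Suc m) * ell i a) + alpha (Suc m) * ell (Suc m) a"
    by (simp add: cumL_def sum.cl_ivl_Suc wgt_def)
  also have "(\<Sum>i=1..m. wgt alpha i (Suc m) * ell i a) = (1 - alpha (Suc m)) * cumL alpha ell m a"
    unfolding cumL_def sum_distrib_left by (intro sum.cong refl) (simp add: w)
  finally show ?thesis using k by simp
qed

lemma cumL0: "cumL alpha ell 0 = (\<lambda>a. 0)"
  by (simp add: cumL_def fun_eq_iff)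

theorem mainTheorem3:
  fixes A :: nat and alpha eta :: "nat \<Rightarrow> real" and ell :: "nat \<Rightarrow> nat \<Rightarrow> real" and n :: nat
  assumes hA: "A \<ge> 1"
    and hloss: "\<And>k a. k \<ge> 1 \<Longrightarrow> a \<in> {1..A} \<Longrightarrow> ell k a \<ge> 0"
    and ha1: "0 < alpha 1" "alpha 1 \<le> 1"
    and heta1: "eta 1 = eta 2 * (1 - alpha 1)"
    and hak: "\<And>k. k \<ge> 2 \<Longrightarrow> 0 < alpha k \<and> alpha k < 1"
    and hetak: "\<And>k. k \<ge> 2 \<Longrightarrow> 0 < eta (k+1) * (1 - alpha k) \<and> eta (k+1) * (1 - alpha k) \<le> eta k"
    and hn: "n \<ge> 1"
  shows "regret A alpha eta ell n
    \<le> (\<Sum>k=1..n. wgt alpha k n *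
          (\<Sum>a=1..A. (ftrl A alpha eta ell k a - pim A alpha eta ell k a) * ell k a))
       + ln (real A) / eta (n+1)"
proof -
  define beta where "beta k = (\<Prod>j\<in>{k+1..n}. (1 - alpha j))" for k
  define Psi where "Psi k = HH A (eta (k+1)) (cumL alpha ell k)" for k
  define f where "f k = beta k * Psi k" for k
  have etapos: "eta k > 0" if "k \<ge> 2" for k
  proof -
    have "k - 1 \<ge> 2 \<or> k = 2" using that by auto
    thus ?thesis
    proof
      assume "k - 1 \<ge> 2"
      from hetak[OF this] hak[OF this] that show ?thesis
        by (simp add: zero_less_mult_iff)
    next
      assume k2: "k = 2"
      have "0 < eta (2+1) * (1 - alpha 2)" "eta (2+1) * (1 - alpha 2) \<le> eta 2"
        using hetak[of 2] by auto
      thus ?thesis unfolding k2 by linarith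
    qed
  qed
  have betanonneg: "beta k \<ge> 0" for k
  proof -
    have "1 - alpha j \<ge> 0" if "j \<ge> 1" for j
      using that hak[of j] ha1 by (cases "j = 1") auto
    thus ?thesis unfolding beta_def by (intro prod_nonneg) auto
  qed
  have betastep: "beta (k - 1) = (1 - alpha k) * beta k" if "1 \<le> k" "k \<le> n" for k
    using that by (simp add: beta_def prod.atLeast_Suc_atMost)
  have perk: "wgt alpha k n * (\<Sum>a=1..A. pim A alpha eta ell k a * ell k a) \<le> f k - f (k - 1)"
    if k: "1 \<le> k" "k \<le> n" for k
  proof -
    have ehpos: "etahat alpha eta k > 0"
      using etapos[of 2] etapos[of k] hak[of k] k by (auto simp: etahat_def)
    define M where "M a = (1 - alpha k) * cumL alpha ell (k - 1) a" for a
    have c1: "(\<Sum>a=1..A. pim A alpha eta ell k a * (cumL alpha ell k a - M a))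
        \<le> HH A (etahat alpha eta k) (cumL alpha ell k) - HH A (etahat alpha eta k) M"
      unfolding pim_def by (rule conc[OF hA ehpos])
    have "(\<Sum>a=1..A. pim A alpha eta ell k a * (cumL alpha ell k a - M a))
        = alpha k * (\<Sum>a=1..A. pim A alpha eta ell k a * ell k a)"
      unfolding sum_distrib_left M_def using k by (intro sum.cong refl) (simp add: cumL_step)
    with c1 have c2: "alpha k * (\<Sum>a=1..A. pim A alpha eta ell k a * ell k a) \<le> Psi k - (1 - alpha k) * Psi (k - 1)"
    proof (cases "k = 1")
      case True
      have "M = (\<lambda>a. 0)" using True by (simp add: M_def cumL0 fun_eq_iff)
      moreover have "Psi 0 = 0" by (simp add: Psi_def cumL0 HH_zero)
      moreover have "etahat alpha eta k = eta (k+1)" using True by (simp add: etahat_def numeral_2_eq_2)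
      ultimately show ?thesis using c1 True \<open>_ = alpha k * _\<close> by (simp add: HH_zero Psi_def)
    next
      case False
      hence k2: "k \<ge> 2" using k by auto
      have ca: "0 < 1 - alpha k" using hak[OF k2] by simp
      have "HH A (etahat alpha eta k) M = (1 - alpha k) * HH A ((1 - alpha k) * etahat alpha eta k) (cumL alpha ell (k - 1))"
        unfolding M_def by (rule scale[OF ca ehpos])
      also have "(1 - alpha k) * etahat alpha eta k = eta k" using False ca by (simp add: etahat_def)
      finally have hm: "HH A (etahat alpha eta k) M = (1 - alpha k) * Psi (k - 1)"
        using k by (simp add: Psi_def)
      have "eta (k+1) \<le> etahat alpha eta k"
        using hetak[OF k2] ca False by (simp add: etahat_def le_divide_eq)
      hence "HH A (etahat alpha eta k) (cumL alpha ell k) \<le> Psi k"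
        unfolding Psi_def using etapos[of "k+1"] k2 by (intro mono[OF hA]) auto
      thus ?thesis using c1 hm \<open>_ = alpha k * _\<close> by linarith
    qed
    have "wgt alpha k n * (\<Sum>a=1..A. pim A alpha eta ell k a * ell k a)
        = beta k * (alpha k * (\<Sum>a=1..A. pim A alpha eta ell k a * ell k a))"
      by (simp add: wgt_def beta_def)
    also have "\<dots> \<le> beta k * (Psi k - (1 - alpha k) * Psi (k - 1))"
      by (intro mult_left_mono c2 betanonneg)
    also have "\<dots> = f k - f (k - 1)" unfolding f_def betastep[OF k] by (simp add: algebra_simps)
    finally show ?thesis .
  qed
  define Y where "Y = (\<Sum>k=1..n. wgt alpha k n * (\<Sum>a=1..A. pim A alpha eta ell k a * ell k a))"
  have "Y \<le> (\<Sum>k=1..n. f k - f (k - 1))"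
    unfolding Y_def by (intro sum_mono perk) auto
  also have "\<dots> = f n - f 0" by (rule tele)
  also have "f 0 = 0" by (simp add: f_def Psi_def cumL0 HH_zero)
  also have "f n = Psi n" by (simp add: f_def beta_def)
  finally have Y: "Y \<le> Psi n" by simp
  define X where "X = (\<Sum>k=1..n. wgt alpha k n * (\<Sum>b=1..A. ftrl A alpha eta ell k b * ell k b))"
  have rhs: "(\<Sum>k=1..n. wgt alpha k n *
          (\<Sum>a=1..A. (ftrl A alpha eta ell k a - pim A alpha eta ell k a) * ell k a)) = X - Y"
    unfolding X_def Y_def
    by (simp add: left_diff_distrib sum_subtractf right_diff_distrib)
  have "X - (\<Sum>k=1..n. wgt alpha k n * ell k a) \<le> X - Y + ln (real A) / eta (n+1)"
    if a: "a \<in> {1..A}" for a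
  proof -
    have "Psi n \<le> cumL alpha ell n a + ln (real A) / eta (n+1)"
      unfolding Psi_def using etapos[of "n+1"] hn by (intro bound[OF hA _ a]) auto
    thus ?thesis using Y by (simp add: cumL_def)
  qed
  hence "regret A alpha eta ell n \<le> X - Y + ln (real A) / eta (n+1)"
    unfolding regret_def X_def[symmetric] using hA by (subst Max_le_iff) auto
  thus ?thesis using rhs by simp
qed

end
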